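(* Let $M\subset E^n$ be an $r$-helix hypersurface and let $H\subset\mathbb{R}^n$ be its subspace of helix directions. Let $\alpha: I\subset\mathbb{R}\to M$ be a unit speed (arc-length parametrized) geodesic curve on $M$. Then the tangent indicatrix $\alpha'(s)$ of $\alpha$, regarded as a curve on the unit hypersphere $S^{n-1}\subset E^n$, is a spherical helix (general helix) with respect to any helix direction $d\in H$.
   Context: $E^n$ denotes $\mathbb{R}^n$ with the standard inner product $\langle X,Y\rangle=\sum x_iy_i$. A hypersurface $M\subset\mathbb{R}^n$ with unit normal field $\xi$ is a helix with respect to a fixed unit direction $d$ if the angle between $d$ and $T_qM$ is the same for all $q\in M$, equivalently $\langle d,\xi\rangle$ is constant on $M$. $M$ is an $r$-helix if there is a linear subspace $H\subset\mathbb{R}^n$ with $\dim H=r$ such that $M$ is a helix with respect to every direction $d\in H$; $H$ is the subspace of helix directions. A curve $\alpha$ on $M$ is a geodesic if $\alpha''$ is normal to $M$ at every point. Curves are assumed regular with nonvanishing curvatures, so that they have a Frenet frame $\{V_1,\dots,V_n\}$ with $V_1'=k_1V_2$, $V_i'=-k_{i-1}V_{i-1}+k_iV_{i+1}$. A curve is a general helix with respect to a fixed direction $d$ if its unit tangent vector makes a constant angle with $d$; a spherical helix is a general helix lying on $S^{n-1}$. *)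

theory Defs
  imports "HOL-Analysis.Analysis"
begin

definition tangent_space :: "(real^'n) set \<Rightarrow> real^'n \<Rightarrow> (real^'n) set" where
  "tangent_space M q = {v. \<exists>e>0. \<exists>\<gamma>. \<gamma> ` ball 0 e \<subseteq> M \<and> \<gamma> 0 = q \<and>
       (\<gamma> has_vector_derivative v) (at 0)}"

definition hypersurface_with_normal :: "(real^'n) set \<Rightarrow> (real^'n \<Rightarrow> real^'n) \<Rightarrow> bool" where
  "hypersurface_with_normal M \<xi> \<longleftrightarrow>
     continuous_on M \<xi> \<and>
     (\<forall>q\<in>M. norm (\<xi> q) = 1 \<and> tangent_space M q = {v. v \<bullet> \<xi> q = 0})"

definition helix_hypersurface :: "(real^'n) set \<Rightarrow> (real^'n \<Rightarrow> real^'n) \<Rightarrow> real^'n \<Rightarrow> bool" where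
  "helix_hypersurface M \<xi> d \<longleftrightarrow> (\<exists>c. \<forall>q\<in>M. d \<bullet> \<xi> q = c)"

definition helix_directions_subspace ::
  "(real^'n) set \<Rightarrow> (real^'n \<Rightarrow> real^'n) \<Rightarrow> nat \<Rightarrow> (real^'n) set \<Rightarrow> bool" where
  "helix_directions_subspace M \<xi> r H \<longleftrightarrow>
     subspace H \<and> dim H = r \<and> (\<forall>d\<in>H. helix_hypersurface M \<xi> d)"

definition geodesic_on ::
  "(real^'n) set \<Rightarrow> (real \<Rightarrow> real^'n) \<Rightarrow> (real \<Rightarrow> real^'n) \<Rightarrow> real set \<Rightarrow> bool" where
  "geodesic_on M \<alpha> \<alpha>2 I \<longleftrightarrow>
     (\<forall>s\<in>I. \<alpha> s \<in> M \<and> (\<forall>v\<in>tangent_space M (\<alpha> s). \<alpha>2 s \<bullet> v = 0))"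

definition general_helix :: "(real \<Rightarrow> real^'n) \<Rightarrow> real set \<Rightarrow> real^'n \<Rightarrow> bool" where
  "general_helix \<beta> I d \<longleftrightarrow>
     (\<forall>s\<in>I. \<beta> differentiable (at s) \<and> vector_derivative \<beta> (at s) \<noteq> 0) \<and>
     (\<exists>c. \<forall>s\<in>I. (vector_derivative \<beta> (at s) /\<^sub>R norm (vector_derivative \<beta> (at s))) \<bullet> d = c)"

definition spherical_helix :: "(real \<Rightarrow> real^'n) \<Rightarrow> real set \<Rightarrow> real^'n \<Rightarrow> bool" where
  "spherical_helix \<beta> I d \<longleftrightarrow> (\<forall>s\<in>I. norm (\<beta> s) = 1) \<and> general_helix \<beta> I d"

end

theory Submission
  imports Defs
begin

lemma parallel_normal:
  fixes w x :: "real^'n"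
  assumes "norm x = 1" and "\<forall>v. v \<bullet> x = 0 \<longrightarrow> w \<bullet> v = 0"
  shows "w = (w \<bullet> x) *\<^sub>R x"
proof -
  have xx: "x \<bullet> x = 1" using assms(1) by (simp add: norm_eq_1)
  define v where "v = w - (w \<bullet> x) *\<^sub>R x"
  have "v \<bullet> x = 0" unfolding v_def by (simp add: inner_diff_left xx)
  hence "w \<bullet> v = 0" using assms(2) by blast
  hence "v \<bullet> v = 0" using \<open>v \<bullet> x = 0\<close> unfolding v_def
    by (simp add: inner_diff_left inner_diff_right inner_commute)
  thus ?thesis unfolding v_def by simp
qed

theorem theorem3p1:
  fixes M :: "(real^'n) set" and \<xi> :: "real^'n \<Rightarrow> real^'n"
    and H :: "(real^'n) set" and r :: nat
    and \<alpha> \<alpha>1 \<alpha>2 :: "real \<Rightarrow> real^'n" and I :: "real set"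
  assumes hyp: "hypersurface_with_normal M \<xi>"
    and helixH: "helix_directions_subspace M \<xi> r H"
    and I: "is_interval I" "open I" "I \<noteq> {}"
    and d1: "\<forall>s\<in>I. (\<alpha> has_vector_derivative \<alpha>1 s) (at s)"
    and d2: "\<forall>s\<in>I. (\<alpha>1 has_vector_derivative \<alpha>2 s) (at s)"
    and unit_speed: "\<forall>s\<in>I. norm (\<alpha>1 s) = 1"
    and cont2: "continuous_on I \<alpha>2"
    and curv: "\<forall>s\<in>I. \<alpha>2 s \<noteq> 0"
    and geo: "geodesic_on M \<alpha> \<alpha>2 I"
  shows "\<forall>d\<in>H. norm d = 1 \<longrightarrow> spherical_helix \<alpha>1 I d"
proof (intro ballI impI)
  fix d assume dH: "d \<in> H" and "norm d = 1"
  obtain c where c: "\<forall>q\<in>M. d \<bullet> \<xi> q = c"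
    using helixH dH unfolding helix_directions_subspace_def helix_hypersurface_def by blast
  have inM: "\<forall>s\<in>I. \<alpha> s \<in> M" using geo unfolding geodesic_on_def by blast
  have xn: "\<forall>s\<in>I. norm (\<xi> (\<alpha> s)) = 1" using hyp inM unfolding hypersurface_with_normal_def by blast
  have par: "\<forall>s\<in>I. \<alpha>2 s = (\<alpha>2 s \<bullet> \<xi> (\<alpha> s)) *\<^sub>R \<xi> (\<alpha> s)"
  proof
    fix s assume s: "s \<in> I"
    have "tangent_space M (\<alpha> s) = {v. v \<bullet> \<xi> (\<alpha> s) = 0}"
      using hyp inM s unfolding hypersurface_with_normal_def by blast
    hence "\<forall>v. v \<bullet> \<xi> (\<alpha> s) = 0 \<longrightarrow> \<alpha>2 s \<bullet> v = 0"
      using geo s unfolding geodesic_on_def by blast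
    thus "\<alpha>2 s = (\<alpha>2 s \<bullet> \<xi> (\<alpha> s)) *\<^sub>R \<xi> (\<alpha> s)"
      using parallel_normal xn s by blast
  qed
  define f where "f s = \<alpha>2 s \<bullet> \<xi> (\<alpha> s)" for s
  have fnz: "\<forall>s\<in>I. f s \<noteq> 0" using par curv unfolding f_def by (metis scale_zero_left)
  have contA: "continuous_on I \<alpha>"
    using d1 by (meson continuous_at_imp_continuous_on has_vector_derivative_continuous)
  have contX: "continuous_on I (\<xi> \<circ> \<alpha>)"
    using continuous_on_compose[OF contA] hyp inM unfolding hypersurface_with_normal_def
    by (meson continuous_on_subset image_subset_iff)
  have contf: "continuous_on I f" unfolding f_def
    using continuous_on_inner[OF cont2 contX] by (simp add: o_def)
  have conn: "connected (f ` I)"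
    using connected_continuous_image[OF contf] I(1) is_interval_connected_1 by blast
  have samesign: "\<And>s t. s \<in> I \<Longrightarrow> t \<in> I \<Longrightarrow> f s > 0 \<Longrightarrow> f t > 0"
  proof (rule ccontr)
    fix s t assume st: "s \<in> I" "t \<in> I" "f s > 0" "\<not> f t > 0"
    hence "f t < 0" using fnz by force
    hence "0 \<in> f ` I" using connectedD_interval[OF conn, of "f t" "f s" 0] st by auto
    thus False using fnz by auto
  qed
  obtain s0 where s0: "s0 \<in> I" using I(3) by blast
  define c' where "c' = (if f s0 > 0 then c else - c)"
  have unitv: "\<forall>s\<in>I. (\<alpha>2 s /\<^sub>R norm (\<alpha>2 s)) \<bullet> d = c'"
  proof
    fix s assume s: "s \<in> I"
    have n: "norm (\<alpha>2 s) = \<bar>f s\<bar>" using par s xn unfolding f_def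
      by (metis mult.right_neutral norm_scaleR)
    have dc: "\<xi> (\<alpha> s) \<bullet> d = c" using c inM s by (simp add: inner_commute)
    have e: "\<alpha>2 s /\<^sub>R norm (\<alpha>2 s) = (f s / \<bar>f s\<bar>) *\<^sub>R \<xi> (\<alpha> s)"
      using par s n unfolding f_def by (metis scaleR_scaleR divide_inverse_commute)
    show "(\<alpha>2 s /\<^sub>R norm (\<alpha>2 s)) \<bullet> d = c'"
    proof (cases "f s0 > 0")
      case True
      hence "f s > 0" using samesign s0 s by blast
      thus ?thesis using e dc True unfolding c'_def by simp
    next
      case False
      hence "\<not> f s > 0" using samesign s0 s by blast
      hence "f s < 0" using fnz s by force
      thus ?thesis using e dc False unfolding c'_def by simp
    qed
  qed
  have vd: "\<forall>s\<in>I. vector_derivative \<alpha>1 (at s) = \<alpha>2 s"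
    using d2 vector_derivative_at by blast
  show "spherical_helix \<alpha>1 I d"
    unfolding spherical_helix_def general_helix_def
  proof (intro conjI)
    show "\<forall>s\<in>I. norm (\<alpha>1 s) = 1" by (rule unit_speed)
    show "\<forall>s\<in>I. \<alpha>1 differentiable at s \<and> vector_derivative \<alpha>1 (at s) \<noteq> 0"
      using d2 vd curv differentiableI_vector by metis
    show "\<exists>c. \<forall>s\<in>I. (vector_derivative \<alpha>1 (at s) /\<^sub>R norm (vector_derivative \<alpha>1 (at s))) \<bullet> d = c"
      using unitv vd by auto
  qed
qed

end
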